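(* Let $p$ be a prime, let $n\geqslant 2$ be an integer, let $m\geqslant 1$ be an integer and let $k\geqslant 2$ be an integer not divisible by $p$. For positive integers $a,r$ let $w(a,r)=\frac{1}{r}\sum_{d\mid r}\mu(d)\,a^{r/d}$, where $\mu$ is the Möbius function. For $i=0,1,\dots,m$ define $$a_i = \frac{w(n,p^{m-i}k)^{p^i}}{p^i\, w(n,p^mk)}.$$ Then: (i) for $i=2,3,\dots,m-1$, we have $a_i/a_{i-1}\leqslant 1$; (ii) $a_1 \leqslant 2/(p^{m-1}k)^{p-1}$ and $a_m \leqslant 2/k^{p^m-1}$. *)

theory Defs
  imports Complex_Main "HOL-Computational_Algebra.Squarefree"
begin

definition moebius_mu :: "nat \<Rightarrow> int" where
  "moebius_mu d = (if squarefree d then (-1) ^ card (prime_factors d) else 0)"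

definition necklace_w :: "nat \<Rightarrow> nat \<Rightarrow> real" where
  "necklace_w a r = (1 / real r) * (\<Sum>d | d dvd r. real_of_int (moebius_mu d) * real a ^ (r div d))"

definition coeff_a :: "nat \<Rightarrow> nat \<Rightarrow> nat \<Rightarrow> nat \<Rightarrow> nat \<Rightarrow> real" where
  "coeff_a p n m k i =
     necklace_w n (p ^ (m - i) * k) ^ (p ^ i) / (real p ^ i * necklace_w n (p ^ m * k))"

end

theory Submission imports Defs begin

lemma mu_1: "moebius_mu 1 = 1" by (simp add: moebius_mu_def)
lemma mu_prime: "prime q \<Longrightarrow> moebius_mu q = -1"
  by (simp add: moebius_mu_def squarefree_prime prime_prime_factors)
lemma mu_abs: "\<bar>moebius_mu d\<bar> \<le> 1" by (simp add: moebius_mu_def)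

lemma geom_le: fixes x :: real assumes "x \<ge> 2" shows "(\<Sum>j<J. x ^ j) \<le> x ^ J - 1"
proof (induction J)
  case 0 then show ?case by simp
next
  case (Suc J)
  have "x ^ J \<ge> 1" using assms by simp
  have "x ^ Suc J \<ge> 2 * x ^ J" using assms by (simp add: mult_right_mono)
  then show ?case using Suc by simp
qed

lemma S_bounds:
  assumes n: "n \<ge> 2" and r: "r \<ge> 2"
  shows "\<exists>J. 1 \<le> J \<and> 2 * J \<le> r \<and>
     real n ^ r - 2 * real n ^ J < (\<Sum>d | d dvd r. real_of_int (moebius_mu d) * real n ^ (r div d))
   \<and> (\<Sum>d | d dvd r. real_of_int (moebius_mu d) * real n ^ (r div d)) < real n ^ r"
proof -
  define x where "x = real n"
  have x2: "x \<ge> 2" using n by (simp add: x_def)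
  define q where "q = (LEAST d. 1 < d \<and> d dvd r)"
  have ex: "1 < r \<and> r dvd r" using r by simp
  have q1: "1 < q" and qr: "q dvd r" using LeastI[of "\<lambda>d. 1 < d \<and> d dvd r", OF ex] by (auto simp: q_def)
  have qmin: "\<And>d. 1 < d \<Longrightarrow> d dvd r \<Longrightarrow> q \<le> d" unfolding q_def by (rule Least_le) simp
  have rpos: "r > 0" using r by simp
  have qprime: "prime q"
    unfolding prime_nat_iff
  proof (intro conjI allI impI q1)
    fix m assume "m dvd q"
    show "m = 1 \<or> m = q"
    proof (rule ccontr)
      assume "\<not> (m = 1 \<or> m = q)"
      moreover have "m \<noteq> 0" using \<open>m dvd q\<close> q1 by (metis dvd_0_left_iff not_one_less_zero)
      moreover have "m \<le> q" using \<open>m dvd q\<close> q1 by (intro dvd_imp_le) auto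
      moreover have "m dvd r" using \<open>m dvd q\<close> qr by (rule dvd_trans)
      ultimately show False using qmin[of m] by auto
    qed
  qed
  define J where "J = r div q"
  have rJ: "r = q * J" using qr by (simp add: J_def)
  have J1: "1 \<le> J" using rJ rpos by (cases J) auto
  have J2: "2 * J \<le> r" using rJ q1 by simp
  define D where "D = {d. d dvd r}"
  define D' where "D' = D - {1, q}"
  have finD: "finite D" using rpos by (simp add: D_def)
  have D_eq: "D = insert 1 (insert q D')" using qr by (auto simp: D_def D'_def)
  have q_ne1: "q \<noteq> 1" using q1 by simp
  define f where "f d = real_of_int (moebius_mu d) * x ^ (r div d)" for d
  have nin: "1 \<notin> insert q D'" "q \<notin> D'" using q_ne1 by (auto simp: D'_def)
  have finD': "finite D'" using finD by (simp add: D'_def)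
  have f1: "f 1 = x ^ r" using mu_1 by (simp add: f_def del: One_nat_def)
  have fq: "f q = - (x ^ J)" by (simp add: f_def mu_prime[OF qprime] J_def)
  have sumD: "sum f D = x ^ r - x ^ J + sum f D'"
    unfolding D_eq using finD' nin f1 fq by (simp add: sum.insert)
  have finD': "finite D'" using finD by (simp add: D'_def)
  have D'gt: "\<And>d. d \<in> D' \<Longrightarrow> q < d \<and> d dvd r"
  proof -
    fix d assume "d \<in> D'"
    hence "d dvd r" "d \<noteq> 1" "d \<noteq> q" by (auto simp: D'_def D_def)
    moreover have "d \<noteq> 0" using \<open>d dvd r\<close> rpos by auto
    ultimately show "q < d \<and> d dvd r" using qmin[of d] by auto
  qed
  have inj: "inj_on (\<lambda>d. r div d) D'"
  proof (rule inj_onI)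
    fix a b assume a: "a \<in> D'" and b: "b \<in> D'" and e: "r div a = r div b"
    have "a dvd r" "b dvd r" using D'gt a b by auto
    hence "r = a * (r div a)" "r = b * (r div b)" by auto
    moreover have "r div a \<noteq> 0"
    proof
      assume "r div a = 0"
      hence "r = a * 0" using \<open>r = a * (r div a)\<close> by simp
      thus False using rpos by simp
    qed
    ultimately show "a = b" using e by (metis mult_right_cancel)
  qed
  have img: "(\<lambda>d. r div d) ` D' \<subseteq> {..<J}"
  proof
    fix y assume "y \<in> (\<lambda>d. r div d) ` D'"
    then obtain d where d: "d \<in> D'" "y = r div d" by auto
    have "q < d" "d dvd r" using D'gt[OF d(1)] by auto
    have "r div d < r div q"
    proof (rule ccontr)
      assume "\<not> r div d < r div q"
      hence Je: "J \<le> r div d" by (simp add: J_def)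
      have "r = d * (r div d)" using \<open>d dvd r\<close> by simp
      moreover have "q * J < d * J" using \<open>q < d\<close> J1 by simp
      moreover have "d * J \<le> d * (r div d)" using Je by simp
      ultimately show False using rJ by linarith
    qed
    thus "y \<in> {..<J}" using d by (simp add: J_def)
  qed
  have absD': "\<bar>sum f D'\<bar> \<le> x ^ J - 1"
  proof -
    have "\<bar>sum f D'\<bar> \<le> (\<Sum>d\<in>D'. \<bar>f d\<bar>)" by (rule sum_abs)
    also have "\<dots> \<le> (\<Sum>d\<in>D'. x ^ (r div d))"
    proof (rule sum_mono)
      fix d
      have "\<bar>real_of_int (moebius_mu d)\<bar> \<le> 1" using mu_abs[of d] by linarith
      moreover have "x ^ (r div d) \<ge> 0" using x2 by simp
      ultimately show "\<bar>f d\<bar> \<le> x ^ (r div d)" unfolding f_def abs_mult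
        by (simp add: mult_left_le_one_le)
    qed
    also have "\<dots> = (\<Sum>j\<in>(\<lambda>d. r div d) ` D'. x ^ j)"
      using sum.reindex[OF inj, of "\<lambda>j. x ^ j"] by simp
    also have "\<dots> \<le> (\<Sum>j<J. x ^ j)"
      by (rule sum_mono2) (use img x2 in auto)
    also have "\<dots> \<le> x ^ J - 1" by (rule geom_le[OF x2])
    finally show ?thesis .
  qed
  have "sum f D = (\<Sum>d | d dvd r. real_of_int (moebius_mu d) * real n ^ (r div d))"
    by (simp add: f_def D_def x_def)
  then show ?thesis using sumD absD' J1 J2 unfolding x_def[symmetric]
    by (intro exI[of _ J]) (auto simp: abs_le_iff)
qed

lemma w_one: "necklace_w n 1 = real n"
proof -
  have "{d. d dvd (1::nat)} = {1}" by auto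
  thus ?thesis using mu_1 by (simp add: necklace_w_def del: One_nat_def)
qed

lemma w_bounds:
  assumes n: "n \<ge> 2" and r: "r \<ge> 1"
  shows "0 < necklace_w n r \<and> necklace_w n r \<le> real n ^ r / real r
       \<and> (r \<ge> 4 \<longrightarrow> real n ^ r / (2 * real r) \<le> necklace_w n r)"
proof (cases "r = 1")
  case True thus ?thesis using n w_one[of n] by (simp del: One_nat_def)
next
  case False
  hence r2: "r \<ge> 2" using r by simp
  obtain J where J: "1 \<le> J" "2 * J \<le> r"
    "real n ^ r - 2 * real n ^ J < (\<Sum>d | d dvd r. real_of_int (moebius_mu d) * real n ^ (r div d))"
    "(\<Sum>d | d dvd r. real_of_int (moebius_mu d) * real n ^ (r div d)) < real n ^ r"
    using S_bounds[OF n r2] by blast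
  define S where "S = (\<Sum>d | d dvd r. real_of_int (moebius_mu d) * real n ^ (r div d))"
  have w: "necklace_w n r = S / real r" by (simp add: necklace_w_def S_def)
  have x2: "real n \<ge> 2" using n by simp
  have rp: "real r > 0" using r by simp
  have "real n ^ r = real n ^ (r - J) * real n ^ J" using J by (simp flip: power_add)
  moreover have "real n ^ (r - J) \<ge> real n ^ 1" using J x2 by (intro power_increasing) auto
  moreover have "real n ^ (r - J) \<ge> 2" using calculation(2) x2 unfolding power_one_right by linarith
  ultimately have A: "real n ^ r \<ge> 2 * real n ^ J"
    using mult_right_mono[of 2 "real n ^ (r - J)" "real n ^ J"] x2 by simp
  have S0: "S > 0" using J(3) A by (simp add: S_def)
  have B: "r \<ge> 4 \<Longrightarrow> real n ^ r \<ge> 4 * real n ^ J"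
  proof -
    assume "r \<ge> 4"
    hence "r - J \<ge> 2" using J by linarith
    hence P1: "real n ^ (r - J) \<ge> real n ^ 2" using x2 by (intro power_increasing) auto
    have P2: "real n ^ 2 \<ge> 4" using mult_mono[OF x2 x2] by (simp add: power2_eq_square)
    have "real n ^ (r - J) \<ge> 4" using P1 P2 by linarith
    moreover have "real n ^ r = real n ^ (r - J) * real n ^ J" using J by (simp flip: power_add)
    ultimately show "real n ^ r \<ge> 4 * real n ^ J"
      using mult_right_mono[of 4 "real n ^ (r - J)" "real n ^ J"] x2 by simp
  qed
  show ?thesis
  proof (intro conjI impI)
    show "0 < necklace_w n r" using S0 rp w by simp
    show "necklace_w n r \<le> real n ^ r / real r" using J(4) rp w S_def
      by (simp add: divide_right_mono)
    assume "r \<ge> 4"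
    hence "S \<ge> real n ^ r / 2" using B J(3) S_def by simp
    thus "real n ^ r / (2 * real r) \<le> necklace_w n r" using w rp
      by (simp add: field_simps)
  qed
qed

lemma G:
  assumes n: "n \<ge> 2" and L: "L \<ge> 1" and P: "P \<ge> 1" and PL: "P * L \<ge> 4"
  shows "necklace_w n L ^ P / (real P * necklace_w n (P * L)) \<le> 2 / real L ^ (P - 1)"
proof -
  define x where "x = real n"
  have x: "x \<ge> 2" using n by (simp add: x_def)
  have wL: "0 < necklace_w n L" "necklace_w n L \<le> x ^ L / real L"
    using w_bounds[OF n L] by (auto simp: x_def)
  have PL1: "P * L \<ge> 1" using P L by simp
  have wPL: "x ^ (P * L) / (2 * real (P * L)) \<le> necklace_w n (P * L)"
    using w_bounds[OF n PL1] PL by (auto simp: x_def)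
  have Lr: "real L > 0" using L by simp
  have Pr: "real P > 0" using P by simp
  have xp: "x ^ (P * L) > 0" using x by simp
  have "necklace_w n L ^ P / (real P * necklace_w n (P * L))
      \<le> (x ^ L / real L) ^ P / (real P * (x ^ (P * L) / (2 * real (P * L))))"
  proof (rule frac_le)
    show "0 \<le> (x ^ L / real L) ^ P" using xp Lr x by simp
    show "necklace_w n L ^ P \<le> (x ^ L / real L) ^ P" using wL by (intro power_mono) auto
    show "0 < real P * (x ^ (P * L) / (2 * real (P * L)))" using Pr xp Lr by simp
    show "real P * (x ^ (P * L) / (2 * real (P * L))) \<le> real P * necklace_w n (P * L)"
      using wPL Pr by (intro mult_left_mono) auto
  qed
  also have "\<dots> = 2 * real L / real L ^ P"
    using Lr Pr xp x by (simp add: power_divide field_simps flip: power_mult)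
  also have "\<dots> = 2 / real L ^ (P - 1)"
  proof -
    have "real L ^ P = real L * real L ^ (P - 1)" using P by (cases P) auto
    thus ?thesis using Lr by simp
  qed
  finally show ?thesis .
qed

lemma H:
  assumes n: "n \<ge> 2" and P: "P \<ge> 2" and L: "L \<ge> 2 * P"
  shows "necklace_w n L ^ P \<le> necklace_w n (P * L)"
proof -
  define x where "x = real n"
  have x: "x \<ge> 2" using n by (simp add: x_def)
  have L1: "L \<ge> 1" using L P by simp
  have wL: "0 < necklace_w n L" "necklace_w n L \<le> x ^ L / real L"
    using w_bounds[OF n L1] by (auto simp: x_def)
  have PL: "P * L \<ge> 4" using mult_le_mono[of 2 P 4 L] P L by simp
  have PL1: "P * L \<ge> 1" using P L1 by simp
  have wPL: "x ^ (P * L) / (2 * real (P * L)) \<le> necklace_w n (P * L)"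
    using w_bounds[OF n PL1] PL by (auto simp: x_def)
  have Lr: "real L > 0" using L1 by simp
  have xp: "x ^ (P * L) > 0" using x by simp
  have LP: "real L ^ P \<ge> 2 * real P * real L"
  proof -
    have "real L ^ P = real L * real L ^ (P - 1)" using P by (cases P) auto
    moreover have Q1: "real L ^ (P - 1) \<ge> real L ^ 1" using P L1 by (intro power_increasing) auto
    moreover have Q2: "real L \<ge> 2 * real P" using L by simp
    have "real L ^ (P - 1) \<ge> 2 * real P" using Q1 Q2 unfolding power_one_right by linarith
    hence "real L * real L ^ (P - 1) \<ge> real L * (2 * real P)" using Lr by (intro mult_left_mono) auto
    ultimately show ?thesis by (simp add: mult.commute mult.left_commute)
  qed
  have "necklace_w n L ^ P \<le> (x ^ L / real L) ^ P" using wL by (intro power_mono) auto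
  also have "\<dots> = x ^ (P * L) / real L ^ P" by (simp add: power_divide flip: power_mult) (simp add: mult.commute)
  also have "\<dots> \<le> x ^ (P * L) / (2 * real (P * L))"
    using LP xp Lr P by (intro divide_left_mono) auto
  also have "\<dots> \<le> necklace_w n (P * L)" by (rule wPL)
  finally show ?thesis .
qed

theorem corollary2p4:
  fixes p n m k :: nat
  assumes "prime p" and "n \<ge> 2" and "m \<ge> 1" and "k \<ge> 2" and "\<not> p dvd k"
  shows "(\<forall>i\<in>{2..m-1}. coeff_a p n m k i / coeff_a p n m k (i - 1) \<le> 1)
       \<and> coeff_a p n m k 1 \<le> 2 / (real (p ^ (m - 1) * k)) ^ (p - 1)
       \<and> coeff_a p n m k m \<le> 2 / (real k) ^ (p ^ m - 1)"
proof (intro conjI ballI)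
  have p2: "p \<ge> 2" using assms(1) by (simp add: prime_ge_2_nat)
  have n: "n \<ge> 2" by fact
  have "p ^ m \<ge> p ^ 1" using p2 assms(3) by (intro power_increasing) auto
  hence pm: "p ^ m \<ge> 2" using p2 by simp
  have R4: "p ^ m * k \<ge> 4" using mult_le_mono[OF pm assms(4)] by simp
  have pmsplit: "p ^ m = p * p ^ (m - 1)" using assms(3) by (cases m) auto
  have Wpos: "necklace_w n (p ^ m * k) > 0" using w_bounds[OF n, of "p ^ m * k"] R4 pm assms(4) by simp
  show "coeff_a p n m k m \<le> 2 / (real k) ^ (p ^ m - 1)"
    using G[OF n, of k "p ^ m"] assms(4) pm R4 by (simp add: coeff_a_def)
  show "coeff_a p n m k 1 \<le> 2 / (real (p ^ (m - 1) * k)) ^ (p - 1)"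
  proof -
    have L1: "1 \<le> p ^ (m - 1) * k" using assms(4) p2 by simp
    have e: "p * (p ^ (m - 1) * k) = p ^ m * k" using pmsplit by simp
    have p1: "p \<ge> 1" using p2 by simp
    have "necklace_w n (p ^ (m - 1) * k) ^ p / (real p * necklace_w n (p * (p ^ (m - 1) * k)))
       \<le> 2 / real (p ^ (m - 1) * k) ^ (p - 1)"
      by (rule G[OF n L1 p1]) (subst e, rule R4)
    thus ?thesis unfolding e by (simp add: coeff_a_def)
  qed
  fix i assume i: "i \<in> {2..m-1}"
  define L where "L = p ^ (m - i) * k"
  have mi: "m - i \<ge> 1" using i by auto
  have "p ^ (m - i) \<ge> p ^ 1" using p2 mi by (intro power_increasing) auto
  hence pmi: "p ^ (m - i) \<ge> p" by simp
  have L2p: "L \<ge> 2 * p" unfolding L_def using mult_le_mono[OF pmi assms(4)] by (simp add: mult.commute)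
  have pL: "p ^ (m - (i - 1)) * k = p * L" proof -
    have "m - (i - 1) = Suc (m - i)" using i mi by auto
    thus ?thesis by (simp add: L_def)
  qed
  have pL1: "p * L \<ge> 1" using L2p p2 by simp
  have wpL: "necklace_w n (p * L) > 0" using w_bounds[OF n pL1] by simp
  have Hk: "necklace_w n L ^ p \<le> necklace_w n (p * L)" by (rule H[OF n p2 L2p])
  have wL0: "necklace_w n L \<ge> 0" using w_bounds[OF n, of L] L2p p2 by simp
  have pi: "p ^ i = p * p ^ (i - 1)" using i by (cases i) auto
  have num: "necklace_w n L ^ (p ^ i) \<le> necklace_w n (p * L) ^ (p ^ (i - 1))"
    unfolding pi power_mult using Hk wL0 by (intro power_mono) auto
  have pr: "real p ^ (i - 1) > 0" using p2 by simp
  have A: "coeff_a p n m k i \<le> coeff_a p n m k (i - 1)"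
  proof -
    have "coeff_a p n m k i = necklace_w n L ^ (p ^ i) / (real p ^ i * necklace_w n (p ^ m * k))"
      by (simp add: coeff_a_def L_def)
    also have "\<dots> \<le> necklace_w n (p * L) ^ (p ^ (i - 1)) / (real p ^ i * necklace_w n (p ^ m * k))"
      using num Wpos p2 by (intro divide_right_mono) auto
    also have "\<dots> \<le> necklace_w n (p * L) ^ (p ^ (i - 1)) / (real p ^ (i - 1) * necklace_w n (p ^ m * k))"
    proof (rule divide_left_mono)
      show "0 \<le> necklace_w n (p * L) ^ (p ^ (i - 1))" using wpL by simp
      have "real p ^ i = real p * real p ^ (i - 1)" using i by (cases i) auto
      moreover have "real p ^ (i - 1) \<le> real p * real p ^ (i - 1)" using p2 pr by simp
      ultimately show "real p ^ (i - 1) * necklace_w n (p ^ m * k) \<le> real p ^ i * necklace_w n (p ^ m * k)"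
        using Wpos by (intro mult_right_mono) auto
      show "0 < real p ^ i * necklace_w n (p ^ m * k) * (real p ^ (i - 1) * necklace_w n (p ^ m * k))"
        using Wpos pr p2 by simp
    qed
    also have "\<dots> = coeff_a p n m k (i - 1)" using pL by (simp add: coeff_a_def)
    finally show ?thesis .
  qed
  have "coeff_a p n m k (i - 1) > 0" using pL wpL Wpos pr by (simp add: coeff_a_def)
  thus "coeff_a p n m k i / coeff_a p n m k (i - 1) \<le> 1" using A by simp
qed

end
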